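(* Let $n\ge 1$ be an integer, suppose that $A\subseteq\mathbb{Z}_5^n$ is sum-free, and that $H<\mathbb{Z}_5^n$ is a maximal proper subgroup. If there is an $H$-coset $g+H$ with $|A\cap(g+H)|>\frac12|H|$, then $A$ has non-empty intersection with at most three $H$-cosets.
   Context: $\mathbb{Z}_5^n$ denotes the elementary abelian $5$-group of rank $n$. A subset $S$ of an abelian group is sum-free if there are no $x,y,z\in S$ (not necessarily distinct) with $x+y=z$. *)

theory Defs
  imports "HOL-Analysis.Analysis" "HOL-Library.Numeral_Type"
begin

text \<open>The elementary abelian 5-group of rank n is modelled as the type 5 ^ 'n
 (vectors over Z/5Z indexed by a finite type 'n with CARD('n) = n).\<close>

definition sum_free :: "'a::plus set \<Rightarrow> bool" where
  "sum_free S \<longleftrightarrow> (\<forall>x\<in>S. \<forall>y\<in>S. \<forall>z\<in>S. x + y \<noteq> z)"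

definition is_subgroup :: "'a::ab_group_add set \<Rightarrow> bool" where
  "is_subgroup H \<longleftrightarrow> 0 \<in> H \<and> (\<forall>x\<in>H. \<forall>y\<in>H. x + y \<in> H) \<and> (\<forall>x\<in>H. - x \<in> H)"

definition maximal_proper_subgroup :: "'a::ab_group_add set \<Rightarrow> bool" where
  "maximal_proper_subgroup H \<longleftrightarrow> is_subgroup H \<and> H \<noteq> UNIV \<and>
     (\<forall>K. is_subgroup K \<and> H \<subseteq> K \<longrightarrow> K = H \<or> K = UNIV)"

definition coset :: "'a::plus \<Rightarrow> 'a set \<Rightarrow> 'a set" where
  "coset g H = (\<lambda>h. g + h) ` H"

definition cosets :: "'a::plus set \<Rightarrow> 'a set set" where
  "cosets H = {coset g H | g. True}"

end

theory Submission
  imports Defs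
begin

lemma five: "(5::5^'n) = 0" by (simp add: vec_eq_iff)

lemma mod5: "of_nat k * (g::5^'n) = of_nat (k mod 5) * g"
proof -
  have "of_nat k * g = of_nat (5*(k div 5)) * g + of_nat (k mod 5) * g"
    by (metis distrib_right mult_div_mod_eq of_nat_add)
  thus ?thesis by (simp add: five)
qed

lemma sg_diff: "is_subgroup H \<Longrightarrow> x \<in> H \<Longrightarrow> y \<in> H \<Longrightarrow> x - y \<in> H"
  unfolding is_subgroup_def by (metis diff_conv_add_uminus)

lemma mem_coset: "is_subgroup H \<Longrightarrow> x \<in> coset g H \<longleftrightarrow> x - g \<in> H"
  unfolding coset_def by (auto simp: image_iff intro!: bexI[of _ "x - g"])

lemma coset_eq: assumes "is_subgroup H" "x - y \<in> H" shows "coset x H = coset y H"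
proof -
  have "z \<in> coset x H \<longleftrightarrow> z \<in> coset y H" for z
  proof -
    have "z - y = (z - x) + (x - y)" "z - x = (z - y) - (x - y)" by simp_all
    thus ?thesis using assms unfolding mem_coset[OF assms(1)] is_subgroup_def
      by (metis sg_diff[OF assms(1)])
  qed
  thus ?thesis by blast
qed

lemma card_coset: "card (coset (g::5^'n) H) = card H"
  unfolding coset_def by (rule card_image) (simp add: inj_on_def)

lemma pigeon:
  fixes X Y C :: "(5^'n) set"
  assumes "X \<subseteq> C" "Y \<subseteq> C" "card X + card Y > card C"
  shows "X \<inter> Y \<noteq> {}"
proof
  assume "X \<inter> Y = {}"
  hence "card (X \<union> Y) = card X + card Y" by (simp add: card_Un_disjoint)
  moreover have "card (X \<union> Y) \<le> card C" using assms by (intro card_mono) auto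
  ultimately show False using assms by simp
qed

theorem proposition2:
  fixes A H :: "(5 ^ 'n) set"
  assumes "sum_free A"
    and "maximal_proper_subgroup H"
    and "\<exists>g. real (card (A \<inter> coset g H)) > real (card H) / 2"
  shows "card {C \<in> cosets H. A \<inter> C \<noteq> {}} \<le> 3"
proof -
  have sg: "is_subgroup H" using assms(2) unfolding maximal_proper_subgroup_def by blast
  from assms(3) obtain g where gB: "real (card (A \<inter> coset g H)) > real (card H) / 2" by blast
  define B where "B = A \<inter> coset g H"
  have Bbig: "card B + card B > card (coset g H)" using gB unfolding B_def card_coset by linarith
  have sf: "x \<in> A \<Longrightarrow> y \<in> A \<Longrightarrow> z \<in> A \<Longrightarrow> x + y \<noteq> z" for x y z
    using assms(1) unfolding sum_free_def by blast
  have claimA: "a \<notin> H" if "a \<in> A" for a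
  proof
    assume aH: "a \<in> H"
    have "(\<lambda>b. a + b) ` B \<subseteq> coset g H"
    proof
      fix x assume "x \<in> (\<lambda>b. a + b) ` B"
      then obtain b where b: "b \<in> B" "x = a + b" by blast
      have "b - g \<in> H" using b mem_coset[OF sg] unfolding B_def by blast
      hence "a + (b - g) \<in> H" using aH sg unfolding is_subgroup_def by blast
      thus "x \<in> coset g H" using b mem_coset[OF sg] by (simp add: algebra_simps)
    qed
    moreover have "card ((\<lambda>b. a + b) ` B) = card B" by (simp add: card_image)
    ultimately have "(\<lambda>b. a + b) ` B \<inter> B \<noteq> {}" using Bbig pigeon[of _ "coset g H" B]
      unfolding B_def by auto
    then obtain b where "b \<in> B" "a + b \<in> B" by blast
    thus False using sf[of a b "a+b"] that unfolding B_def by blast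
  qed
  have claimB: "x - (g + g) \<notin> H" if "x \<in> A" for x
  proof
    assume xH: "x - (g + g) \<in> H"
    have "(\<lambda>b. x - b) ` B \<subseteq> coset g H"
    proof
      fix y assume "y \<in> (\<lambda>b. x - b) ` B"
      then obtain b where b: "b \<in> B" "y = x - b" by blast
      have "b - g \<in> H" using b mem_coset[OF sg] unfolding B_def by blast
      hence "(x - (g + g)) - (b - g) \<in> H" using xH sg_diff[OF sg] by blast
      moreover have "(x - (g + g)) - (b - g) = y - g" using b by (simp add: algebra_simps)
      ultimately show "y \<in> coset g H" using mem_coset[OF sg] by simp
    qed
    moreover have "card ((\<lambda>b. x - b) ` B) = card B" by (simp add: card_image inj_on_def)
    ultimately have "(\<lambda>b. x - b) ` B \<inter> B \<noteq> {}" using Bbig pigeon[of _ "coset g H" B]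
      unfolding B_def by auto
    then obtain b where "b \<in> B" "x - b \<in> B" by blast
    thus False using sf[of b "x - b" x] that unfolding B_def by auto
  qed
  have "B \<noteq> {}" using Bbig by auto
  then obtain b where b: "b \<in> A" "b - g \<in> H" using mem_coset[OF sg] unfolding B_def by blast
  have gH: "g \<notin> H"
  proof
    assume "g \<in> H"
    hence "(b - g) + g \<in> H" using b sg unfolding is_subgroup_def by blast
    thus False using claimA b by simp
  qed
  define K where "K = {x. \<exists>k::nat. x - of_nat k * g \<in> H}"
  have Ksg: "is_subgroup K" unfolding is_subgroup_def
  proof (intro conjI ballI)
    show "0 \<in> K" unfolding K_def using sg unfolding is_subgroup_def
      by (intro CollectI exI[of _ 0]) simp
  next
    fix x y assume "x \<in> K" "y \<in> K"
    then obtain k l where "x - of_nat k * g \<in> H" "y - of_nat l * g \<in> H" unfolding K_def by blast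
    hence "(x - of_nat k * g) + (y - of_nat l * g) \<in> H" using sg unfolding is_subgroup_def by blast
    hence "x + y - of_nat (k + l) * g \<in> H" by (simp add: algebra_simps)
    thus "x + y \<in> K" unfolding K_def by blast
  next
    fix x assume "x \<in> K"
    then obtain k where "x - of_nat k * g \<in> H" unfolding K_def by blast
    hence m: "- (x - of_nat k * g) \<in> H" using sg unfolding is_subgroup_def by blast
    moreover have eq: "- (x - of_nat k * g) = - x - of_nat (4 * k) * g"
    proof -
      have "of_nat (4 * k) * g + of_nat k * g = of_nat (4 * k + k) * g"
        by (simp only: of_nat_add distrib_right)
      also have "4 * k + k = 5 * k" by simp
      finally have "of_nat (4 * k) * g + of_nat k * g = 0" by (simp add: five)
      thus ?thesis by (simp add: algebra_simps)
    qed
    have "- x - of_nat (4 * k) * g \<in> H" using m unfolding eq .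
    thus "- x \<in> K" unfolding K_def by blast
  qed
  have "H \<subseteq> K" unfolding K_def by (auto intro: exI[of _ 0])
  moreover have "g \<in> K" unfolding K_def using sg unfolding is_subgroup_def
    by (intro CollectI exI[of _ 1]) simp
  ultimately have KU: "K = UNIV" using assms(2) Ksg gH unfolding maximal_proper_subgroup_def by blast
  have rep: "\<exists>j\<in>{0,1,2,3,4::nat}. x - of_nat j * g \<in> H" for x
  proof -
    have "x \<in> K" using KU by simp
    then obtain k where "x - of_nat k * g \<in> H" unfolding K_def by blast
    hence "x - of_nat (k mod 5) * g \<in> H" using mod5 by metis
    moreover have "k mod 5 \<in> {0,1,2,3,4}" by auto
    ultimately show ?thesis by (rule bexI)
  qed
  have sub: "{C \<in> cosets H. A \<inter> C \<noteq> {}} \<subseteq> (\<lambda>j. coset (of_nat j * g) H) ` {1,3,4::nat}"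
  proof
    fix C assume "C \<in> {C \<in> cosets H. A \<inter> C \<noteq> {}}"
    then obtain y x where C: "C = coset y H" and x: "x \<in> A" "x \<in> C" unfolding cosets_def by blast
    have "x - y \<in> H" using x C mem_coset[OF sg] by blast
    hence C2: "C = coset x H" using C coset_eq[OF sg] by metis
    obtain j where j: "j \<in> {0,1,2,3,4::nat}" "x - of_nat j * g \<in> H" using rep by blast
    have "j \<noteq> 0" using j claimA x by auto
    moreover have "j \<noteq> 2"
    proof
      assume "j = 2"
      hence "x - of_nat 2 * g \<in> H" using j(2) by simp
      moreover have "of_nat 2 * g = g + g"
        by (simp only: one_add_one[symmetric] of_nat_add of_nat_1 distrib_right mult_1)
      ultimately show False using claimB[OF x(1)] by metis
    qed
    ultimately have "j \<in> {1,3,4}" using j by auto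
    moreover have "C = coset (of_nat j * g) H" using C2 coset_eq[OF sg j(2)] by simp
    ultimately show "C \<in> (\<lambda>j. coset (of_nat j * g) H) ` {1,3,4::nat}" by blast
  qed
  have "card {C \<in> cosets H. A \<inter> C \<noteq> {}} \<le> card ((\<lambda>j. coset (of_nat j * g) H) ` {1,3,4::nat})"
    by (rule card_mono[OF _ sub]) simp
  also have "\<dots> \<le> card {1,3,4::nat}" by (rule card_image_le) simp
  also have "\<dots> = 3" by simp
  finally show ?thesis .
qed

end
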